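(* In the ALOHA network described below with a fixed transmit probability $p\in(0,1)$, consider the normalized mean local delay $\frac{\widetilde{D}(p)}{\log_2(1+\theta)}$ as a function of the SINR threshold $\theta>0$, and let $\theta_{\mathrm{opt}}$ denote its minimizer. (i) In the noise-limited regime (interference neglected, i.e. $\widetilde{D}(p)=\frac1p\exp(\theta r_0^\alpha WN_0)$), $$\theta_{\mathrm{opt}}=\exp\left(\mathcal{W}\left(\frac{1}{r_0^{\alpha}WN_0}\right)\right)-1,$$ where $\mathcal{W}$ is the Lambert $\mathcal{W}$ function, i.e. $\mathcal{W}(z)e^{\mathcal{W}(z)}=z$. (ii) In the interference-limited regime (noise neglected, $N_0=0$), $$\theta_{\mathrm{opt}}\in\left(b_0^{-1/(\delta+1)}-1,\ b_0^{-1/\delta}\right),\qquad b_0=\lambda c_d r_0^d\delta C(\delta)p(1-p)^{\delta-1}.$$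
   Context: Model: transmitters form a homogeneous Poisson point process $\Phi$ of intensity $\lambda>0$ in $\mathbb{R}^d$; the typical receiver is at the origin and its desired transmitter $x_0\in\Phi$ is at distance $r_0>0$; probabilities are under the Palm distribution at $x_0$. Time is slotted. Path loss $\kappa r^{-\alpha}$ with $\alpha>d$, $\delta=d/\alpha\in(0,1)$. Power fading coefficients $h_{k,x}$ are i.i.d. exponential with mean $1$ over transmitters and slots, independent of everything. Unit power, always backlogged transmitters. Bandwidth $W$, noise power spectral density $N_r$, $N_0=N_r/\kappa$, SINR threshold $\theta>0$. $c_d$ is the volume of the unit ball in $\mathbb{R}^d$, $C(\delta)=\Gamma(1+\delta)\Gamma(1-\delta)=\frac{\pi\delta}{\sin(\pi\delta)}$. ALOHA with transmit probability $p$: each transmitter (including $x_0$) is independently active in each slot with probability $p$; $\Phi_k$ is the active set in slot $k$; $\mathrm{SINR}_k=\frac{h_{k,x_0}r_0^{-\alpha}}{WN_0+\sum_{x\in\Phi\setminus\{x_0\}}h_{k,x}|x|^{-\alpha}\mathbf{1}(x\in\Phi_k)}$; a slot is successful if $x_0$ is active and $\mathrm{SINR}_k>\theta$; the local delay is the number of slots until the first success and $\widetilde{D}(p)$ (depending on $\theta$) is its mean, which equals $\frac1p\exp\left(\frac{p\lambda c_d r_0^d\theta^\delta C(\delta)}{(1-p)^{1-\delta}}+\theta r_0^\alpha WN_0\right)$. The normalization by $\log_2(1+\theta)$ accounts for slot duration proportional to $1/\log_2(1+\theta)$. *)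

theory Defs
  imports "HOL-Analysis.Analysis"
begin

definition lambert_W :: "real \<Rightarrow> real" where
  "lambert_W z = (THE w. w \<ge> -1 \<and> w * exp w = z)"

definition C_delta :: "real \<Rightarrow> real" where
  "C_delta \<delta> = Gamma (1 + \<delta>) * Gamma (1 - \<delta>)"

text \<open>Closed form of the mean local delay of ALOHA with transmit probability p
  and SINR threshold theta, in dimension d with path-loss exponent alpha.
  Parameters: lam (intensity), r0 (link distance), W (bandwidth), N0 (noise).
  c_d is the volume of the unit ball in R^d.\<close>
definition mean_local_delay ::
  "nat \<Rightarrow> real \<Rightarrow> real \<Rightarrow> real \<Rightarrow> real \<Rightarrow> real \<Rightarrow> real \<Rightarrow> real \<Rightarrow> real" where
  "mean_local_delay d \<alpha> lam r0 W N0 p \<theta> =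
     (let \<delta> = real d / \<alpha> in
      (1 / p) * exp (p * lam * unit_ball_vol (real d) * r0 ^ d * \<theta> powr \<delta> * C_delta \<delta>
                       / (1 - p) powr (1 - \<delta>)
                     + \<theta> * r0 powr \<alpha> * W * N0))"

definition normalized_delay ::
  "nat \<Rightarrow> real \<Rightarrow> real \<Rightarrow> real \<Rightarrow> real \<Rightarrow> real \<Rightarrow> real \<Rightarrow> real \<Rightarrow> real" where
  "normalized_delay d \<alpha> lam r0 W N0 p \<theta> =
     mean_local_delay d \<alpha> lam r0 W N0 p \<theta> / log 2 (1 + \<theta>)"

definition is_minimizer :: "real set \<Rightarrow> (real \<Rightarrow> real) \<Rightarrow> real \<Rightarrow> bool" where
  "is_minimizer S f x \<longleftrightarrow> x \<in> S \<and> (\<forall>y\<in>S. f x \<le> f y)"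

end

theory Submission
  imports Defs
begin


lemma strict_min:
  fixes H H' :: "real \<Rightarrow> real"
  assumes t: "t > 0"
    and D: "\<And>x. x > 0 \<Longrightarrow> (H has_real_derivative H' x) (at x)"
    and neg: "\<And>x. 0 < x \<Longrightarrow> x < t \<Longrightarrow> H' x < 0"
    and pos: "\<And>x. t < x \<Longrightarrow> H' x > 0"
    and y: "y > 0" "y \<noteq> t"
  shows "H t < H y"
proof (cases "y < t")
  case True
  from MVT2[of y t H H'] obtain z where z: "y < z" "z < t" "H t - H y = (t - y) * H' z"
    using True D y t by force
  have "H' z < 0" using neg z y by auto
  then have "(t - y) * H' z < 0" using True by (simp add: mult_pos_neg)
  then show ?thesis using z by linarith
next
  case False
  then have yt: "t < y" using y by auto
  from MVT2[of t y H H'] obtain z where z: "t < z" "z < y" "H y - H t = (y - t) * H' z"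
    using yt D y t by force
  have "H' z > 0" using pos z by auto
  then have "(y - t) * H' z > 0" using yt by simp
  then show ?thesis using z by linarith
qed

lemma min_char:
  fixes f H :: "real \<Rightarrow> real"
  assumes t: "t > 0" and c: "c > 0" and f: "\<And>y. y > 0 \<Longrightarrow> f y = c * exp (H y)"
    and st: "\<And>y. y > 0 \<Longrightarrow> y \<noteq> t \<Longrightarrow> H t < H y"
  shows "(\<exists>\<theta>. is_minimizer {0<..} f \<theta>) \<and> (\<forall>\<theta>. is_minimizer {0<..} f \<theta> \<longrightarrow> \<theta> = t)"
proof
  have lt: "f t < f y" if "y > 0" "y \<noteq> t" for y
    using st[OF that] f[OF that(1)] f[OF t] c by simp
  show "\<exists>\<theta>. is_minimizer {0<..} f \<theta>"
    unfolding is_minimizer_def using t lt by (metis greaterThan_iff less_eq_real_def)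
  show "\<forall>\<theta>. is_minimizer {0<..} f \<theta> \<longrightarrow> \<theta> = t"
    unfolding is_minimizer_def using t lt by (meson greaterThan_iff not_le)
qed

lemma lambertW_eq:
  assumes "w > 0" "w * exp w = z"
  shows "lambert_W z = w"
  unfolding lambert_W_def
proof (rule the_equality)
  show "w \<ge> -1 \<and> w * exp w = z" using assms by auto
  fix v assume v: "v \<ge> -1 \<and> v * exp v = z"
  have zp: "z > 0" using assms by (metis exp_gt_zero mult_pos_pos)
  have vp: "v > 0"
  proof (rule ccontr)
    assume "\<not> v > 0" then have "v * exp v \<le> 0" by (simp add: mult_nonpos_nonneg)
    then show False using v zp by simp
  qed
  have mono: "a * exp a < b * exp b" if "0 < a" "a < b" for a b :: real
    using that by (simp add: mult_strict_mono)
  show "v = w"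
    using mono[of v w] mono[of w v] vp assms v by (metis linorder_neqE_linordered_idom less_irrefl)
qed



lemma psi_mono:
  fixes x y :: real assumes "0 < x" "x < y"
  shows "(1+x)*ln(1+x) < (1+y)*ln(1+y)"
proof -
  have "ln (1+x) < ln(1+y)" using assms by simp
  moreover have "0 < ln(1+x)" using assms by simp
  ultimately show ?thesis using assms by (intro mult_strict_mono) auto
qed

lemma part1:
  fixes a c :: real and f :: "real \<Rightarrow> real"
  assumes a: "a > 0" and c: "c > 0"
    and f: "\<And>y. y > 0 \<Longrightarrow> f y = c * exp (a*y - ln(ln(1+y)))"
  shows "(\<exists>\<theta>. is_minimizer {0<..} f \<theta>) \<and> (\<forall>\<theta>. is_minimizer {0<..} f \<theta> \<longrightarrow> \<theta> = exp (lambert_W (1/a)) - 1)"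
proof -
  have "\<exists>w. 0 \<le> w \<and> w \<le> 1/a \<and> w * exp w = 1/a"
  proof (rule IVT)
    show "0 * exp 0 \<le> 1/a" using a by simp
    have "1/a * 1 \<le> 1/a * exp (1/a)" using a by (intro mult_left_mono) auto
    then show "1/a \<le> 1/a * exp(1/a)" by simp
  qed (use a in \<open>auto intro!: continuous_intros\<close>)
  then obtain w where w: "0 \<le> w" "w * exp w = 1/a" by auto
  have wp: "w > 0" using w a by (metis div_0 less_eq_real_def mult_zero_left zero_neq_one divide_eq_0_iff less_numeral_extra(3))
  have LW: "lambert_W (1/a) = w" using lambertW_eq wp w by auto
  define t where "t = exp w - 1"
  have tp: "t > 0" using wp t_def by simp
  have psit: "(1+t)*ln(1+t) = 1/a" using w(2) t_def by (simp add: mult.commute)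
  let ?H = "\<lambda>x::real. a*x - ln(ln(1+x))"
  let ?H' = "\<lambda>x::real. a - 1/((1+x)*ln(1+x))"
  have D: "(?H has_real_derivative ?H' x) (at x)" if "x > 0" for x
    using that by (auto intro!: derivative_eq_intros simp: field_simps)
  have neg: "?H' x < 0" if "0 < x" "x < t" for x
  proof -
    have "(1+x)*ln(1+x) < 1/a" using psi_mono[OF that] psit by simp
    moreover have "0 < (1+x)*ln(1+x)" using that by simp
    ultimately have "a < 1/((1+x)*ln(1+x))" using a by (simp add: field_simps)
    then show ?thesis by simp
  qed
  have pos: "?H' x > 0" if "t < x" for x
  proof -
    have "1/a < (1+x)*ln(1+x)" using psi_mono[OF tp that] psit by simp
    moreover have "0 < (1+x)*ln(1+x)" using that tp by simp
    ultimately have "1/((1+x)*ln(1+x)) < a" using a by (simp add: field_simps)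
    then show ?thesis by simp
  qed
  have "(\<exists>\<theta>. is_minimizer {0<..} f \<theta>) \<and> (\<forall>\<theta>. is_minimizer {0<..} f \<theta> \<longrightarrow> \<theta> = t)"
  proof (rule min_char[OF tp c f])
    fix y :: real assume "y > 0" "y \<noteq> t"
    then show "?H t < ?H y" using strict_min[where H="?H" and H'="?H'", OF tp D neg pos] by blast
  qed
  then show ?thesis using LW t_def by simp
qed



lemma ln_lower: fixes x :: real assumes "x > 0" shows "x < (1+x) * ln(1+x)"
proof -
  have y: "0 < 1/(1+x)" "1/(1+x) \<noteq> 1" using assms by auto
  have "ln (1/(1+x)) \<le> 1/(1+x) - 1" using ln_le_minus_one y by blast
  moreover have "ln (1/(1+x)) \<noteq> 1/(1+x) - 1" using ln_eq_minus_one y by blast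
  ultimately have "ln (1/(1+x)) < 1/(1+x) - 1" by simp
  then have "- ln (1+x) < 1/(1+x) - 1" using assms by (simp add: ln_div)
  then have "x/(1+x) < ln(1+x)" using assms by (simp add: field_simps)
  then show ?thesis using assms by (simp add: field_simps)
qed

definition phi :: "real \<Rightarrow> real \<Rightarrow> real" where
  "phi \<delta> x = x powr (\<delta>-1) * ((1+x)*ln(1+x))"

lemma phi_bounds:
  assumes "x > 0"
  shows "x powr \<delta> < phi \<delta> x" "phi \<delta> x < x powr \<delta> * (1+x)"
proof -
  have e: "x powr \<delta> = x powr (\<delta>-1) * x" using assms by (simp add: powr_diff)
  have p: "x powr (\<delta>-1) > 0" using assms by simp
  show "x powr \<delta> < phi \<delta> x" unfolding phi_def e using ln_lower[OF assms] p by simp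
  have "(1+x)*ln(1+x) < (1+x)*x" using ln_add_one_self_less_self[OF assms] assms by simp
  then have "x powr (\<delta>-1) * ((1+x)*ln(1+x)) < x powr (\<delta>-1) * ((1+x)*x)"
    using p by (rule mult_strict_left_mono)
  then show "phi \<delta> x < x powr \<delta> * (1+x)" unfolding phi_def e
    by (simp add: algebra_simps)
qed

lemma phi_deriv:
  assumes "x > 0" "0 < \<delta>"
  shows "\<exists>y. (phi \<delta> has_real_derivative y) (at x) \<and> y > 0"
proof -
  let ?y = "(\<delta>-1) * x powr (\<delta>-1-1) * ((1+x)*ln(1+x)) + x powr (\<delta>-1) * (ln(1+x) + 1)"
  have D: "(phi \<delta> has_real_derivative ?y) (at x)"
    unfolding phi_def using assms apply (auto intro!: derivative_eq_intros simp: algebra_simps)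
    by (metis add_divide_distrib distrib_right mult_1 nonzero_mult_div_cancel_left add_pos_pos zero_less_one less_irrefl)
  have e: "x powr (\<delta>-1) = x powr (\<delta>-1-1) * x" using assms by (simp add: powr_diff power2_eq_square)
  have "?y = x powr (\<delta>-1-1) * (\<delta>*((1+x)*ln(1+x)) + (x - ln(1+x)))"
    unfolding e by (simp add: algebra_simps)
  moreover have "0 < \<delta>*((1+x)*ln(1+x)) + (x - ln(1+x))"
    using assms ln_add_one_self_less_self[OF assms(1)] by (simp add: add_pos_pos)
  ultimately have "?y > 0" using assms by simp
  then show ?thesis using D by blast
qed

lemma phi_mono:
  assumes "0 < a" "a < b" "0 < \<delta>"
  shows "phi \<delta> a < phi \<delta> b"
proof (rule DERIV_pos_imp_increasing_open[OF assms(2)])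
  show "\<And>x. a < x \<Longrightarrow> x < b \<Longrightarrow> \<exists>y. (phi \<delta> has_real_derivative y) (at x) \<and> 0 < y"
    using phi_deriv assms by auto
  show "continuous_on {a..b} (phi \<delta>)"
    using phi_deriv assms by (intro continuous_at_imp_continuous_on ballI)
      (metis DERIV_isCont atLeastAtMost_iff less_le_trans)
qed



lemma powr_neg_inv: fixes b e :: real assumes "b > 0"
  shows "b powr (-1/e) = (1/b) powr (1/e)"
proof -
  have "-1/e = -(1/e)" by simp
  then show ?thesis using assms by (simp add: powr_minus_divide powr_divide)
qed

lemma part2:
  fixes K \<delta> c :: real and f :: "real \<Rightarrow> real"
  assumes K: "K > 0" and d: "0 < \<delta>" "\<delta> < 1" and c: "c > 0"
    and f: "\<And>y. y > 0 \<Longrightarrow> f y = c * exp (K * y powr \<delta> - ln(ln(1+y)))"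
  shows "(\<exists>\<theta>. is_minimizer {0<..} f \<theta>) \<and> (\<forall>\<theta>. is_minimizer {0<..} f \<theta> \<longrightarrow>
          (K*\<delta>) powr (-1/(\<delta>+1)) - 1 < \<theta> \<and> \<theta> < (K*\<delta>) powr (-1/\<delta>))"
proof -
  define b where "b = K*\<delta>"
  have b: "b > 0" using K d b_def by simp
  define M where "M = b powr (-1/\<delta>)"
  have Mp: "M > 0" using b M_def by simp
  have "M powr \<delta> = b powr (-1)" unfolding M_def using d by (simp add: powr_powr)
  then have Md: "M powr \<delta> = 1/b" using b by (simp add: powr_minus_divide)
  have phiM: "1/b < phi \<delta> M" using phi_bounds(1)[OF Mp, of \<delta>] Md by simp
  define e where "e = min 1 ((1/(2*b)) powr (1/\<delta>))"
  have ep: "e > 0" using b e_def by simp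
  have "e powr \<delta> \<le> ((1/(2*b)) powr (1/\<delta>)) powr \<delta>"
    unfolding e_def using d b by (intro powr_mono2) auto
  also have "\<dots> = 1/(2*b)" using d b by (simp add: powr_powr)
  finally have e1: "e powr \<delta> \<le> 1/(2*b)" .
  have e2: "1 + e \<le> 2" unfolding e_def by simp
  have "e powr \<delta> * (1+e) \<le> 1/(2*b) * 2"
    using e1 e2 ep b by (intro mult_mono) auto
  then have phie: "phi \<delta> e < 1/b" using phi_bounds(2)[OF ep, of \<delta>] b by simp
  have eM: "e \<le> M"
  proof (rule ccontr)
    assume "\<not> e \<le> M"
    then have "phi \<delta> M < phi \<delta> e" using phi_mono[OF Mp _ d(1)] by simp
    then show False using phie phiM by simp
  qed
  have cont: "isCont (phi \<delta>) x" if "x > 0" for x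
    using phi_deriv[OF that d(1)] DERIV_isCont by blast
  have "\<exists>x. e \<le> x \<and> x \<le> M \<and> phi \<delta> x = 1/b"
    using phie phiM eM ep cont by (intro IVT) auto
  then obtain t where t: "e \<le> t" "phi \<delta> t = 1/b" by blast
  have tp: "t > 0" using t ep by simp
  let ?H = "\<lambda>x::real. K * x powr \<delta> - ln(ln(1+x))"
  let ?H' = "\<lambda>x::real. b * x powr (\<delta>-1) - 1/((1+x)*ln(1+x))"
  have D: "(?H has_real_derivative ?H' x) (at x)" if "x > 0" for x
    using that unfolding b_def by (auto intro!: derivative_eq_intros simp: field_simps)
  have key: "?H' x = (phi \<delta> x - 1/b) * (b / ((1+x)*ln(1+x)))" if "x > 0" for x
  proof -
    have Sp: "(1+x)*ln(1+x) > 0" using that by simp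
    have g: "\<And>P S B::real. S \<noteq> 0 \<Longrightarrow> B \<noteq> 0 \<Longrightarrow> (P*S - 1/B)*(B/S) = B*P - 1/S"
      by (simp add: field_simps)
    have S0: "(1+x)*ln(1+x) \<noteq> 0" using Sp by (metis less_irrefl)
    have b0: "b \<noteq> 0" using b by simp
    show ?thesis unfolding phi_def by (simp only: g[OF S0 b0])

  qed
  have fpos: "b / ((1+x)*ln(1+x)) > 0" if "x > 0" for x using that b by simp
  have neg: "?H' x < 0" if "0 < x" "x < t" for x
  proof -
    have "phi \<delta> x < 1/b" using phi_mono[OF that d(1)] t by simp
    then have "(phi \<delta> x - 1/b) * (b / ((1+x)*ln(1+x))) < 0"
      using fpos[OF that(1)] by (intro mult_neg_pos) auto
    then show ?thesis by (subst key[OF that(1)])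
  qed
  have pos: "?H' x > 0" if "t < x" for x
  proof -
    have xp: "x > 0" using that tp by simp
    have "phi \<delta> x > 1/b" using phi_mono[OF tp that d(1)] t by simp
    then have "(phi \<delta> x - 1/b) * (b / ((1+x)*ln(1+x))) > 0"
      using fpos[OF xp] by (intro mult_pos_pos) auto
    then show ?thesis by (subst key[OF xp])
  qed
  have sm: "\<And>y. y>0 \<Longrightarrow> y \<noteq> t \<Longrightarrow> ?H t < ?H y"
    using strict_min[where H="?H" and H'="?H'", OF tp D neg pos] by blast
  have mc: "(\<exists>\<theta>. is_minimizer {0<..} f \<theta>) \<and> (\<forall>\<theta>. is_minimizer {0<..} f \<theta> \<longrightarrow> \<theta> = t)"
    by (rule min_char[where H="?H", OF tp c f sm])
  have up: "t < b powr (-1/\<delta>)"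
  proof -
    have "t powr \<delta> < 1/b" using phi_bounds(1)[OF tp, of \<delta>] t by simp
    then have "(t powr \<delta>) powr (1/\<delta>) < (1/b) powr (1/\<delta>)"
      using d by (intro powr_less_mono2) auto
    moreover have "(t powr \<delta>) powr (1/\<delta>) = t" using d tp by (simp add: powr_powr)
    ultimately show ?thesis using powr_neg_inv[OF b, of \<delta>] by simp
  qed
  have lo: "b powr (-1/(\<delta>+1)) - 1 < t"
  proof -
    have "t powr \<delta> \<le> (1+t) powr \<delta>" using tp d by (intro powr_mono2) auto
    then have "t powr \<delta> * (1+t) \<le> (1+t) powr \<delta> * (1+t)" using tp by (intro mult_right_mono) auto
    also have "\<dots> = (1+t) powr (\<delta>+1)" using tp by (simp add: powr_add)
    finally have "1/b < (1+t) powr (\<delta>+1)" using phi_bounds(2)[OF tp, of \<delta>] t by simp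
    then have "(1/b) powr (1/(\<delta>+1)) < ((1+t) powr (\<delta>+1)) powr (1/(\<delta>+1))"
      using d b by (intro powr_less_mono2) auto
    also have "\<dots> = 1 + t" using tp d by (simp add: powr_powr)
    finally show ?thesis using powr_neg_inv[OF b, of "\<delta>+1"] by simp
  qed
  show ?thesis using mc up lo b_def by auto
qed



lemma nd_form:
  fixes E y p :: real assumes "y > 0" "p > 0"
  shows "(1/p) * exp E / log 2 (1+y) = (ln 2 / p) * exp (E - ln (ln (1+y)))"
proof -
  have l: "ln (1+y) > 0" using assms by simp
  have "exp (E - ln (ln (1+y))) = exp E / ln(1+y)" using l by (simp add: exp_diff)
  then show ?thesis using l assms by (simp add: log_def field_simps)
qed

theorem theorem8:
  fixes d :: nat and \<alpha> lam r0 W N0 p :: real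
  assumes d_pos: "d \<ge> 1" and alpha: "\<alpha> > real d"
    and lam: "lam > 0" and r0: "r0 > 0" and W: "W > 0" and N0: "N0 > 0"
    and p: "0 < p" "p < 1"
  shows
    "((\<exists>\<theta>. is_minimizer {0<..} (normalized_delay d \<alpha> 0 r0 W N0 p) \<theta>) \<and>
      (\<forall>\<theta>. is_minimizer {0<..} (normalized_delay d \<alpha> 0 r0 W N0 p) \<theta> \<longrightarrow>
         \<theta> = exp (lambert_W (1 / (r0 powr \<alpha> * W * N0))) - 1)) \<and>
     ((\<exists>\<theta>. is_minimizer {0<..} (normalized_delay d \<alpha> lam r0 W 0 p) \<theta>) \<and>
      (\<forall>\<theta>. is_minimizer {0<..} (normalized_delay d \<alpha> lam r0 W 0 p) \<theta> \<longrightarrow>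
         (let \<delta> = real d / \<alpha>;
              b0 = lam * unit_ball_vol (real d) * r0 ^ d * \<delta> * C_delta \<delta> * p * (1 - p) powr (\<delta> - 1)
          in b0 powr (-1 / (\<delta> + 1)) - 1 < \<theta> \<and> \<theta> < b0 powr (-1 / \<delta>))))"
proof -
  define \<delta> where "\<delta> = real d / \<alpha>"
  have ap: "\<alpha> > 0" using alpha d_pos by simp
  have d0: "0 < \<delta>" "\<delta> < 1" using d_pos alpha ap unfolding \<delta>_def by (auto simp: field_simps)
  have c: "ln 2 / p > 0" using p by simp
  define a where "a = r0 powr \<alpha> * W * N0"
  have a: "a > 0" using r0 W N0 a_def by simp
  have f1: "normalized_delay d \<alpha> 0 r0 W N0 p y = (ln 2 / p) * exp (a*y - ln(ln(1+y)))"
    if "y > 0" for y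
    unfolding normalized_delay_def mean_local_delay_def Let_def
    using nd_form[OF that p(1), of "y * r0 powr \<alpha> * W * N0"] by (simp add: a_def mult.commute mult.left_commute)
  note P1 = part1[OF a c f1]
  define K where "K = p * lam * unit_ball_vol (real d) * r0 ^ d * C_delta \<delta> / (1 - p) powr (1 - \<delta>)"
  have Cp: "C_delta \<delta> > 0" unfolding C_delta_def using d0 by (simp add: Gamma_real_pos)
  have K: "K > 0" unfolding K_def using p lam r0 Cp by simp
  have f2: "normalized_delay d \<alpha> lam r0 W 0 p y = (ln 2 / p) * exp (K * y powr \<delta> - ln(ln(1+y)))"
    if "y > 0" for y
    unfolding normalized_delay_def mean_local_delay_def Let_def
    using nd_form[OF that p(1), of "K * y powr \<delta>"] by (simp add: K_def \<delta>_def field_simps)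
  note P2 = part2[OF K d0 c f2]
  have b0: "K * \<delta> = lam * unit_ball_vol (real d) * r0 ^ d * \<delta> * C_delta \<delta> * p * (1 - p) powr (\<delta> - 1)"
  proof -
    have "(1 - p) powr (\<delta> - 1) = 1 / (1-p) powr (1 - \<delta>)"
      using p by (simp add: powr_minus_divide[symmetric])
    then show ?thesis unfolding K_def by simp
  qed
  show ?thesis using P1 P2 unfolding a_def b0 Let_def \<delta>_def[symmetric] by simp
qed

end
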